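(* For any integers $k,l\geq 1$, the subsets $C_{k,l}$ and $\Phi_{k,l}C_{l,k}=\{\Phi_{k,l}\circ\tau\mid\tau\in C_{l,k}\}$ of $S_{k+l}$ are disjoint.
   Context: $S_m$ is the symmetric group on $\{1,\dots,m\}$ with product given by composition. An $(s,t)$-shuffle is a pair $(\alpha,\beta)$ of strictly increasing maps $\alpha:\{1,\dots,s\}\to\{1,\dots,s+t\}$, $\beta:\{1,\dots,t\}\to\{1,\dots,s+t\}$ with disjoint images; ${\sf Sh}^1(s,t)$ is the set of those with $\alpha(1)=1$. For $p,q\geq1$, $0\leq i\leq q-1$ and $(\alpha,\beta)\in{\sf Sh}^1(q-i,i)$, let $\tilde\sigma_{\alpha,\beta,p,q}\in S_{p+q}$ be given by $\tilde\sigma(j)=j$ for $1\leq j\leq p$, $\tilde\sigma(p+j)=p+\beta(i+1-j)$ for $1\leq j\leq i$, $\tilde\sigma(p+i+j)=p+\alpha(j)$ for $1\leq j\leq q-i$; let $\sigma_{\alpha,\beta,p,q}=\tilde\sigma_{\alpha,\beta,p,q}\circ(1,2)^i$ where $(1,2)$ is the transposition. Set $C_{p,q}=\{\sigma_{\alpha,\beta,p,q}\mid 0\leq i\leq q-1,\ (\alpha,\beta)\in{\sf Sh}^1(q-i,i)\}\subseteq S_{p+q}$. $\Phi_{k,l}\in S_{k+l}$ is defined by $\Phi_{k,l}(i)=i+k$ if $i\leq l$ and $\Phi_{k,l}(i)=i-l$ if $i>l$. *)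

theory Defs
  imports Main
begin

text \<open>Permutations of {1..m} are represented as functions nat \<Rightarrow> nat,
  extended by the identity outside {1..m}.  Composition is function composition.\<close>

text \<open>(s,t)-shuffles with alpha(1) = 1. The maps alpha, beta are functions nat \<Rightarrow> nat
  of which only the values on {1..s} resp. {1..t} matter.\<close>
definition Sh1 :: "nat \<Rightarrow> nat \<Rightarrow> ((nat \<Rightarrow> nat) \<times> (nat \<Rightarrow> nat)) set" where
  "Sh1 s t = {(\<alpha>, \<beta>).
      strict_mono_on {1..s} \<alpha> \<and> \<alpha> ` {1..s} \<subseteq> {1..s+t} \<and>
      strict_mono_on {1..t} \<beta> \<and> \<beta> ` {1..t} \<subseteq> {1..s+t} \<and>
      \<alpha> ` {1..s} \<inter> \<beta> ` {1..t} = {} \<and> \<alpha> 1 = 1}"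

definition sigma_tilde :: "(nat \<Rightarrow> nat) \<Rightarrow> (nat \<Rightarrow> nat) \<Rightarrow> nat \<Rightarrow> nat \<Rightarrow> nat \<Rightarrow> nat \<Rightarrow> nat" where
  "sigma_tilde \<alpha> \<beta> p q i j =
     (if 1 \<le> j \<and> j \<le> p then j
      else if p < j \<and> j \<le> p + i then p + \<beta> (i + 1 - (j - p))
      else if p + i < j \<and> j \<le> p + q then p + \<alpha> (j - p - i)
      else j)"

definition swap12 :: "nat \<Rightarrow> nat" where
  "swap12 j = (if j = 1 then 2 else if j = 2 then 1 else j)"

definition sigma :: "(nat \<Rightarrow> nat) \<Rightarrow> (nat \<Rightarrow> nat) \<Rightarrow> nat \<Rightarrow> nat \<Rightarrow> nat \<Rightarrow> nat \<Rightarrow> nat" where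
  "sigma \<alpha> \<beta> p q i = sigma_tilde \<alpha> \<beta> p q i \<circ> (swap12 ^^ i)"

definition C :: "nat \<Rightarrow> nat \<Rightarrow> (nat \<Rightarrow> nat) set" where
  "C p q = {sigma \<alpha> \<beta> p q i | i \<alpha> \<beta>. i \<le> q - 1 \<and> (\<alpha>, \<beta>) \<in> Sh1 (q - i) i}"

definition Phi :: "nat \<Rightarrow> nat \<Rightarrow> nat \<Rightarrow> nat" where
  "Phi k l i = (if 1 \<le> i \<and> i \<le> l then i + k
                else if l < i \<and> i \<le> k + l then i - l else i)"

end

theory Submission
  imports Defs
begin

lemma swap_pow_ge3: "x \<ge> 3 \<Longrightarrow> (swap12 ^^ n) x = x"
  by (induction n) (auto simp: swap12_def)

lemma swap_pow_1: "(swap12 ^^ n) 1 = (if even n then 1 else 2)"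
  by (induction n) (auto simp: swap12_def)

lemma Phi_eq: "Phi k l y = k + 1 \<Longrightarrow> 1 \<le> l \<Longrightarrow> y = 1"
  by (auto simp: Phi_def split: if_splits)

lemma Phi_eq1: "Phi k l y = 1 \<Longrightarrow> 1 \<le> l \<Longrightarrow> 1 \<le> k \<Longrightarrow> y = l + 1"
  by (auto simp: Phi_def split: if_splits)

theorem lemma4:
  fixes k l :: nat
  assumes "k \<ge> 1" and "l \<ge> 1"
  shows "C k l \<inter> ((\<lambda>\<tau>. Phi k l \<circ> \<tau>) ` C l k) = {}"
proof (rule ccontr)
  assume "C k l \<inter> ((\<lambda>\<tau>. Phi k l \<circ> \<tau>) ` C l k) \<noteq> {}"
  then obtain i a b i' a' b' where
    i: "i \<le> l - 1" "(a, b) \<in> Sh1 (l - i) i" and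
    i': "i' \<le> k - 1" "(a', b') \<in> Sh1 (k - i') i'" and
    eq: "sigma a b k l i = Phi k l \<circ> sigma a' b' l k i'"
    unfolding C_def by blast
  have a': "\<And>j. j \<in> {1..k - i'} \<Longrightarrow> a' j \<ge> 1" "\<And>j. j \<in> {1..i'} \<Longrightarrow> b' j \<ge> 1"
    using i'(2) unfolding Sh1_def by (fastforce simp: image_subset_iff)+
  show False
  proof (cases "k + i + 1 \<ge> 3")
    case True
    define x where "x = k + i + 1"
    have "sigma a b k l i x = k + 1"
      using True i \<open>l \<ge> 1\<close> unfolding sigma_def sigma_tilde_def Sh1_def x_def
      by (auto simp: swap_pow_ge3)
    hence "Phi k l (sigma a' b' l k i' x) = k + 1" using eq by (metis comp_apply)
    hence "sigma a' b' l k i' x = 1" using Phi_eq assms by blast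
    hence t: "sigma_tilde a' b' l k i' x = 1"
      using True unfolding sigma_def x_def by (simp add: swap_pow_ge3)
    have xr: "x \<le> k + l" using i \<open>l \<ge> 1\<close> unfolding x_def by simp
    show False
    proof (cases "x \<le> l")
      case True then show ?thesis using t \<open>3 \<le> k + i + 1\<close> unfolding sigma_tilde_def x_def by auto
    next
      case False
      show ?thesis
      proof (cases "x \<le> l + i'")
        case True
        have "i' + 1 - (x - l) \<in> {1..i'}" using True False by auto
        then show ?thesis using a'(2)[of "i' + 1 - (x - l)"] t True False assms
          unfolding sigma_tilde_def by auto
      next
        case F2: False
        have "x - l - i' \<in> {1..k - i'}" using F2 False xr by auto
        then show ?thesis using a'(1)[of "x - l - i'"] t F2 False xr assms
          unfolding sigma_tilde_def by auto
      qed
    qed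
  next
    case False
    hence k1: "k = 1" "i = 0" using assms by auto
    have "sigma a b k l i 1 = 1" using k1 unfolding sigma_def sigma_tilde_def by simp
    hence "Phi k l (sigma a' b' l k i' 1) = 1" using eq by (metis comp_apply)
    hence s: "sigma a' b' l k i' 1 = l + 1" using Phi_eq1 assms by blast
    have "i' = 0" using i' k1 by simp
    then show False using s assms unfolding sigma_def sigma_tilde_def by simp
  qed
qed

end
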